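(* Assume Non-Degeneracy Assumption I, and let $U,P$ be the optimal solutions constructed from a base sequence and a nonnegative solution of the base-sequence system as in the Structure Theorem part (i). Let $\check U=\sum_n\tau_nu^n$, $\check P=\sum_n\tau_np^n$, and define $\underline{x}\in\mathbb{R}^K$, $\underline{q}\in\mathbb{R}^J$ by $$\underline{x}_k=-\min\Big\{0,\ \min_{1\le n\le N}\sum_{m=1}^n\dot x^m_k\tau_m\Big\},\qquad \underline{q}_j=-\min\Big\{0,\ \min_{1\le n\le N}\sum_{m=n}^N\dot q^m_j\tau_m\Big\}.$$ Then $(\mathbf{u}^0,\mathbf{u}^N)$ is an optimal solution of $$\max\ (\gamma+cT)^\top\mathbf{u}^0+\gamma^\top\mathbf{u}^N\ \text{ s.t. } A\mathbf{u}^0\le\beta-\underline{x},\ A\mathbf{u}^0+A\mathbf{u}^N\le\beta+bT-A\check U,\ \mathbf{u}^0,\mathbf{u}^N\ge0,$$ and $(\mathbf{p}^N,\mathbf{p}^0)$ is an optimal solution of $$\min\ (\beta+bT)^\top\mathbf{p}^N+\beta^\top\mathbf{p}^0\ \text{ s.t. } A^\top\mathbf{p}^N\ge\gamma+\underline{q},\ A^\top\mathbf{p}^N+A^\top\mathbf{p}^0\ge\gamma+cT-A^\top\check P,\ \mathbf{p}^N,\mathbf{p}^0\ge0.$$ (These two LPs are not dual to each other.)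
   Context: Let $A$ be a real $K\times J$ matrix, $\beta,b\in\mathbb{R}^K$, $\gamma,c\in\mathbb{R}^J$, $T>0$. M-CLP: maximize $\int_{0-}^T(\gamma+(T-t)c)^\top dU(t)$ over nonnegative, non-decreasing, right-continuous $U:[0,T]\to\mathbb{R}^J$ with $U(0-)=0$, subject to $AU(t)\le\beta+bt$, $0\le t\le T$. M-CLP$^*$: minimize $\int_{0-}^T(\beta+(T-t)b)^\top dP(t)$ over nonnegative, non-decreasing, right-continuous $P:[0,T]\to\mathbb{R}^K$ with $P(0-)=0$, subject to $A^\top P(t)\ge\gamma+ct$. Non-Degeneracy Assumption I: $b$ is not a linear combination of fewer than $K$ columns of $[A\ I]$ and $c$ is not a linear combination of fewer than $J$ columns of $[A^\top\ I]$. Bases: index sets $\mathcal{K}\subseteq\{1..K\},\mathcal{J}\subseteq\{1..J\}$ such that $\dot x_k$ ($k\in\mathcal{K}$), $u_j$ ($j\notin\mathcal{J}$) are $K$ variables with independent columns in $[A\ I]$; primal basic solution solves $Au+\dot x=b$ with $u_j=0$ ($j\in\mathcal{J}$), $\dot x_k=0$ ($k\notin\mathcal{K}$); dual basic solution solves $A^\top p-\dot q=c$ with $p_k=0$ ($k\in\mathcal{K}$), $\dot q_j=0$ ($j\notin\mathcal{J}$). Admissible: $u,p\ge0$. Adjacent: one pivot apart, primal variable $v_n$ leaving from $B_n$ to $B_{n+1}$. A base sequence consists of admissible, consecutively adjacent bases $B_1..B_N$ (index sets $\mathcal{K}_n,\mathcal{J}_n$, rates $u^n,\dot x^n,p^n,\dot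 q^n$) plus index sets $\mathcal{K}_0,\mathcal{J}_0,\mathcal{K}_{N+1},\mathcal{J}_{N+1}$ with $\mathcal{K}_0\subseteq\mathcal{K}_1$, $\mathcal{J}_{N+1}\subseteq\mathcal{J}_N$. The base-sequence system in unknowns $\mathbf{u}^0,\mathbf{u}^N,q^N,\mathbf{q}^0\in\mathbb{R}^J$, $x^0,\mathbf{x}^N,\mathbf{p}^0,\mathbf{p}^N\in\mathbb{R}^K$, $\tau_1..\tau_N$, with $x^n=x^0+\sum_{m\le n}\dot x^m\tau_m$, $q^n=q^N+\sum_{m>n}\dot q^m\tau_m$, is: (a) $x^n_k=0$ if $v_n=\dot x_k$, $q^n_j=0$ if $v_n=u_j$ ($n=1..N-1$); (b) $\sum\tau_n=T$; (c) $\mathbf{u}^0_j=0$ ($j\in\mathcal{J}_0$), $x^0_k=0$ ($k\notin\mathcal{K}_0$), $\mathbf{p}^0_k=0$ ($k\in\mathcal{K}_0$), $\mathbf{q}^0_j=0$ ($j\notin\mathcal{J}_0$), $\mathbf{p}^N_k=0$ ($k\in\mathcal{K}_{N+1}$), $q^N_j=0$ ($j\notin\mathcal{J}_{N+1}$), $\mathbf{u}^N_j=0$ ($j\in\mathcal{J}_{N+1}$), $\mathbf{x}^N_k=0$ ($k\notin\mathcal{K}_{N+1}$); (d) $A\mathbf{u}^0+x^0=\beta$, $A^\top\mathbf{p}^N-q^N=\gamma$; (e) $A\mathbf{u}^N+\mathbf{x}^N-x^N=0$, $A^\top\mathbf{p}^0-\mathbf{q}^0+q^0=0$. Constructed functions: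 $t_n=\sum_{m\le n}\tau_m$, $u(t)=u^n$ on $(t_{n-1},t_n)$, $U(t)=\mathbf{u}^0+\int_0^tu$ ($t<T$), $U(T)=U(T-)+\mathbf{u}^N$; $p(s)=p^n$ on $(T-t_n,T-t_{n-1})$, $P(s)=\mathbf{p}^N+\int_0^sp$ ($s<T$), $P(T)=P(T-)+\mathbf{p}^0$. *)

theory Defs
  imports "HOL-Analysis.Analysis"
begin

text \<open>The matrix A is a real K x J matrix, rendered as
  A :: real^'j^'k (rows indexed by 'k, columns by 'j).
  Primal variables are encoded in the sum type 'k + 'j: Inl k stands for the
  slack rate xdot_k, Inr j stands for u_j.\<close>

definition col_AI :: "real^'j^'k \<Rightarrow> ('k + 'j) \<Rightarrow> real^'k" where
  "col_AI A v = (case v of Inl k \<Rightarrow> axis k 1 | Inr j \<Rightarrow> column j A)"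

text \<open>Columns of [A^T I]: Inl j is the identity column e_j, Inr k is column k of A^T.\<close>
definition col_ATI :: "real^'j^'k \<Rightarrow> ('j + 'k) \<Rightarrow> real^'j" where
  "col_ATI A v = (case v of Inl j \<Rightarrow> axis j 1 | Inr k \<Rightarrow> column k (transpose A))"

definition nondeg_I :: "real^'j^'k \<Rightarrow> real^'k \<Rightarrow> real^'j \<Rightarrow> bool" where
  "nondeg_I A b c \<longleftrightarrow>
     (\<forall>S (w::('k + 'j) \<Rightarrow> real). card S < CARD('k) \<longrightarrow> b \<noteq> (\<Sum>v\<in>S. w v *\<^sub>R col_AI A v)) \<and>
     (\<forall>S (w::('j + 'k) \<Rightarrow> real). card S < CARD('j) \<longrightarrow> c \<noteq> (\<Sum>v\<in>S. w v *\<^sub>R col_ATI A v))"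

definition basic_vars :: "'k set \<Rightarrow> 'j set \<Rightarrow> ('k + 'j) set" where
  "basic_vars Ks Js = Inl ` Ks \<union> Inr ` (- Js)"

text \<open>(Ks, Js) is a basis: the K variables xdot_k (k in Ks), u_j (j not in Js)
  have linearly independent columns in [A I].\<close>
definition is_basis :: "real^'j^'k \<Rightarrow> 'k set \<Rightarrow> 'j set \<Rightarrow> bool" where
  "is_basis A Ks Js \<longleftrightarrow> card Ks + card (- Js) = CARD('k) \<and>
     (\<forall>u xd. (\<forall>j\<in>Js. u $ j = 0) \<and> (\<forall>k. k \<notin> Ks \<longrightarrow> xd $ k = 0) \<and> A *v u + xd = 0
        \<longrightarrow> u = 0 \<and> xd = 0)"

definition primal_basic_sol :: "real^'j^'k \<Rightarrow> real^'k \<Rightarrow> 'k set \<Rightarrow> 'j set \<Rightarrow> real^'j \<Rightarrow> real^'k \<Rightarrow> bool" where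
  "primal_basic_sol A b Ks Js u xd \<longleftrightarrow>
     A *v u + xd = b \<and> (\<forall>j\<in>Js. u $ j = 0) \<and> (\<forall>k. k \<notin> Ks \<longrightarrow> xd $ k = 0)"

definition dual_basic_sol :: "real^'j^'k \<Rightarrow> real^'j \<Rightarrow> 'k set \<Rightarrow> 'j set \<Rightarrow> real^'k \<Rightarrow> real^'j \<Rightarrow> bool" where
  "dual_basic_sol A c Ks Js p qd \<longleftrightarrow>
     transpose A *v p - qd = c \<and> (\<forall>k\<in>Ks. p $ k = 0) \<and> (\<forall>j. j \<notin> Js \<longrightarrow> qd $ j = 0)"

definition adjacent :: "'k set \<Rightarrow> 'j set \<Rightarrow> 'k set \<Rightarrow> 'j set \<Rightarrow> bool" where
  "adjacent Ks Js Ks' Js' \<longleftrightarrow>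
     card (basic_vars Ks Js - basic_vars Ks' Js') = 1 \<and>
     card (basic_vars Ks' Js' - basic_vars Ks Js) = 1"

definition leaving :: "(nat \<Rightarrow> 'k set) \<Rightarrow> (nat \<Rightarrow> 'j set) \<Rightarrow> nat \<Rightarrow> 'k + 'j" where
  "leaving Ks Js n = the_elem (basic_vars (Ks n) (Js n) - basic_vars (Ks (Suc n)) (Js (Suc n)))"

text \<open>Base sequence B_1..B_N with index sets Ks n, Js n (n = 0..N+1) and rates
  u n, xd n, p n, qd n (n = 1..N).\<close>
definition base_sequence ::
  "real^'j^'k \<Rightarrow> real^'k \<Rightarrow> real^'j \<Rightarrow> nat \<Rightarrow> (nat \<Rightarrow> 'k set) \<Rightarrow> (nat \<Rightarrow> 'j set) \<Rightarrow>
   (nat \<Rightarrow> real^'j) \<Rightarrow> (nat \<Rightarrow> real^'k) \<Rightarrow> (nat \<Rightarrow> real^'k) \<Rightarrow> (nat \<Rightarrow> real^'j) \<Rightarrow> bool" where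
  "base_sequence A b c N Ks Js u xd p qd \<longleftrightarrow>
     1 \<le> N \<and>
     (\<forall>n\<in>{1..N}. is_basis A (Ks n) (Js n) \<and>
        primal_basic_sol A b (Ks n) (Js n) (u n) (xd n) \<and>
        dual_basic_sol A c (Ks n) (Js n) (p n) (qd n) \<and>
        0 \<le> u n \<and> 0 \<le> p n) \<and>
     (\<forall>n\<in>{1..<N}. adjacent (Ks n) (Js n) (Ks (Suc n)) (Js (Suc n))) \<and>
     Ks 0 \<subseteq> Ks 1 \<and> Js (Suc N) \<subseteq> Js N"

definition xseq :: "real^'k \<Rightarrow> (nat \<Rightarrow> real^'k) \<Rightarrow> (nat \<Rightarrow> real) \<Rightarrow> nat \<Rightarrow> real^'k" where
  "xseq x0 xd \<tau> n = x0 + (\<Sum>m\<in>{1..n}. \<tau> m *\<^sub>R xd m)"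

definition qseq :: "real^'j \<Rightarrow> (nat \<Rightarrow> real^'j) \<Rightarrow> (nat \<Rightarrow> real) \<Rightarrow> nat \<Rightarrow> nat \<Rightarrow> real^'j" where
  "qseq qN qd \<tau> N n = qN + (\<Sum>m\<in>{n<..N}. \<tau> m *\<^sub>R qd m)"

text \<open>The base-sequence system (a)-(e). Arguments: u0b = bold u^0, uNb = bold u^N,
  qN = q^N, q0b = bold q^0, x0 = x^0, xNb = bold x^N, p0b = bold p^0, pNb = bold p^N.\<close>
definition bs_system ::
  "real^'j^'k \<Rightarrow> real^'k \<Rightarrow> real^'j \<Rightarrow> real \<Rightarrow> nat \<Rightarrow> (nat \<Rightarrow> 'k set) \<Rightarrow> (nat \<Rightarrow> 'j set) \<Rightarrow>
   (nat \<Rightarrow> real^'k) \<Rightarrow> (nat \<Rightarrow> real^'j) \<Rightarrow>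
   real^'j \<Rightarrow> real^'j \<Rightarrow> real^'j \<Rightarrow> real^'j \<Rightarrow> real^'k \<Rightarrow> real^'k \<Rightarrow> real^'k \<Rightarrow> real^'k \<Rightarrow>
   (nat \<Rightarrow> real) \<Rightarrow> bool" where
  "bs_system A \<beta> \<gamma> T N Ks Js xd qd u0b uNb qN q0b x0 xNb p0b pNb \<tau> \<longleftrightarrow>
     (\<forall>n\<in>{1..<N}. (case leaving Ks Js n of
          Inl k \<Rightarrow> xseq x0 xd \<tau> n $ k = 0
        | Inr j \<Rightarrow> qseq qN qd \<tau> N n $ j = 0)) \<and>
     (\<Sum>n\<in>{1..N}. \<tau> n) = T \<and>
     (\<forall>j\<in>Js 0. u0b $ j = 0) \<and> (\<forall>k. k \<notin> Ks 0 \<longrightarrow> x0 $ k = 0) \<and>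
     (\<forall>k\<in>Ks 0. p0b $ k = 0) \<and> (\<forall>j. j \<notin> Js 0 \<longrightarrow> q0b $ j = 0) \<and>
     (\<forall>k\<in>Ks (Suc N). pNb $ k = 0) \<and> (\<forall>j. j \<notin> Js (Suc N) \<longrightarrow> qN $ j = 0) \<and>
     (\<forall>j\<in>Js (Suc N). uNb $ j = 0) \<and> (\<forall>k. k \<notin> Ks (Suc N) \<longrightarrow> xNb $ k = 0) \<and>
     A *v u0b + x0 = \<beta> \<and> transpose A *v pNb - qN = \<gamma> \<and>
     A *v uNb + xNb - xseq x0 xd \<tau> N = 0 \<and>
     transpose A *v p0b - q0b + qseq qN qd \<tau> N 0 = 0"

definition bs_nonneg ::
  "nat \<Rightarrow> (nat \<Rightarrow> real^'k) \<Rightarrow> (nat \<Rightarrow> real^'j) \<Rightarrow>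
   real^'j \<Rightarrow> real^'j \<Rightarrow> real^'j \<Rightarrow> real^'j \<Rightarrow> real^'k \<Rightarrow> real^'k \<Rightarrow> real^'k \<Rightarrow> real^'k \<Rightarrow>
   (nat \<Rightarrow> real) \<Rightarrow> bool" where
  "bs_nonneg N xd qd u0b uNb qN q0b x0 xNb p0b pNb \<tau> \<longleftrightarrow>
     0 \<le> u0b \<and> 0 \<le> uNb \<and> 0 \<le> qN \<and> 0 \<le> q0b \<and> 0 \<le> x0 \<and> 0 \<le> xNb \<and> 0 \<le> p0b \<and> 0 \<le> pNb \<and>
     (\<forall>n\<in>{1..N}. 0 \<le> \<tau> n) \<and>
     (\<forall>n\<in>{0..N}. 0 \<le> xseq x0 xd \<tau> n \<and> 0 \<le> qseq qN qd \<tau> N n)"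

definition bnd_primal_feasible ::
  "real^'j^'k \<Rightarrow> real^'k \<Rightarrow> real^'k \<Rightarrow> real \<Rightarrow> real^'k \<Rightarrow> real^'j \<Rightarrow> real^'j \<Rightarrow> real^'j \<Rightarrow> bool" where
  "bnd_primal_feasible A \<beta> b T xlow Uc u0 uN \<longleftrightarrow>
     A *v u0 \<le> \<beta> - xlow \<and> A *v u0 + A *v uN \<le> \<beta> + T *\<^sub>R b - A *v Uc \<and> 0 \<le> u0 \<and> 0 \<le> uN"

definition bnd_primal_optimal ::
  "real^'j^'k \<Rightarrow> real^'k \<Rightarrow> real^'k \<Rightarrow> real^'j \<Rightarrow> real^'j \<Rightarrow> real \<Rightarrow> real^'k \<Rightarrow> real^'j \<Rightarrow> real^'j \<Rightarrow> real^'j \<Rightarrow> bool" where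
  "bnd_primal_optimal A \<beta> b \<gamma> c T xlow Uc u0 uN \<longleftrightarrow>
     bnd_primal_feasible A \<beta> b T xlow Uc u0 uN \<and>
     (\<forall>u0' uN'. bnd_primal_feasible A \<beta> b T xlow Uc u0' uN' \<longrightarrow>
        (\<gamma> + T *\<^sub>R c) \<bullet> u0' + \<gamma> \<bullet> uN' \<le> (\<gamma> + T *\<^sub>R c) \<bullet> u0 + \<gamma> \<bullet> uN)"

definition bnd_dual_feasible ::
  "real^'j^'k \<Rightarrow> real^'j \<Rightarrow> real^'j \<Rightarrow> real \<Rightarrow> real^'j \<Rightarrow> real^'k \<Rightarrow> real^'k \<Rightarrow> real^'k \<Rightarrow> bool" where
  "bnd_dual_feasible A \<gamma> c T qlow Pc pN p0 \<longleftrightarrow>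
     \<gamma> + qlow \<le> transpose A *v pN \<and>
     \<gamma> + T *\<^sub>R c - transpose A *v Pc \<le> transpose A *v pN + transpose A *v p0 \<and>
     0 \<le> pN \<and> 0 \<le> p0"

definition bnd_dual_optimal ::
  "real^'j^'k \<Rightarrow> real^'k \<Rightarrow> real^'k \<Rightarrow> real^'j \<Rightarrow> real^'j \<Rightarrow> real \<Rightarrow> real^'j \<Rightarrow> real^'k \<Rightarrow> real^'k \<Rightarrow> real^'k \<Rightarrow> bool" where
  "bnd_dual_optimal A \<beta> b \<gamma> c T qlow Pc pN p0 \<longleftrightarrow>
     bnd_dual_feasible A \<gamma> c T qlow Pc pN p0 \<and>
     (\<forall>pN' p0'. bnd_dual_feasible A \<gamma> c T qlow Pc pN' p0' \<longrightarrow>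
        (\<beta> + T *\<^sub>R b) \<bullet> pN + \<beta> \<bullet> p0 \<le> (\<beta> + T *\<^sub>R b) \<bullet> pN' + \<beta> \<bullet> p0')"

end

theory Submission imports Defs begin
lemma tr_dot: fixes A :: "real^'j::finite^'k::finite"
  shows "(A *v x) \<bullet> y = x \<bullet> (transpose A *v y)"
  by (metis adjoint_matrix adjoint_works matrix_vector_mul_linear)
lemma sc: fixes A :: "real^'j::finite^'k::finite" shows "A *v (c *\<^sub>R x) = c *\<^sub>R (A *v x)"
  by (metis matrix_vector_mul_linear linear_scale)
lemma dot_mono: fixes y a b :: "real^'n::finite" assumes "0 \<le> y" "a \<le> b" shows "y \<bullet> a \<le> y \<bullet> b"
  using assms unfolding inner_vec_def less_eq_vec_def
  by (auto intro!: sum_mono mult_left_mono)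
lemma dot_zero: fixes y a :: "real^'n::finite" assumes "\<And>i. y$i = 0 \<or> a$i = 0" shows "y \<bullet> a = 0"
  using assms unfolding inner_vec_def by (auto intro!: sum.neutral)
lemma the1: "card S = 1 \<Longrightarrow> x \<in> S \<Longrightarrow> the_elem S = x"
  by (metis card_1_singletonE singletonD the_elem_eq)

lemma primal_cert:
  fixes A :: "real^'j::finite^'k::finite"
  assumes y: "0 \<le> ya" "0 \<le> yb"
    and sa: "transpose A *v (ya + yb) = ga + sa" "0 \<le> sa"
    and sb: "transpose A *v yb = gb + sb" "0 \<le> sb"
    and c1: "sa \<bullet> u0 = 0" "sb \<bullet> uN = 0"
    and c2: "ya \<bullet> (ra - A *v u0) = 0" "yb \<bullet> (rb - A *v u0 - A *v uN) = 0"
    and f: "A *v u0' \<le> ra" "A *v u0' + A *v uN' \<le> rb" "0 \<le> u0'" "0 \<le> uN'"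
  shows "ga \<bullet> u0' + gb \<bullet> uN' \<le> ga \<bullet> u0 + gb \<bullet> uN"
proof -
  have ga: "ga = transpose A *v (ya + yb) - sa" using sa by simp
  have gb: "gb = transpose A *v yb - sb" using sb by simp
  have val: "ga \<bullet> u0 + gb \<bullet> uN = ya \<bullet> ra + yb \<bullet> rb"
  proof -
    have "ga \<bullet> u0 + gb \<bullet> uN = (transpose A *v (ya + yb)) \<bullet> u0 + (transpose A *v yb) \<bullet> uN"
      using c1 by (simp add: ga gb inner_diff_left)
    also have "\<dots> = (ya + yb) \<bullet> (A *v u0) + yb \<bullet> (A *v uN)"
      by (metis tr_dot inner_commute)
    also have "\<dots> = ya \<bullet> ra + yb \<bullet> rb"
      using c2 by (simp add: inner_diff_right inner_add_left inner_add_right)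
    finally show ?thesis .
  qed
  have "ga \<bullet> u0' \<le> (transpose A *v (ya + yb)) \<bullet> u0'"
    using dot_mono[of u0' ga "transpose A *v (ya + yb)"] f sa
    by (simp add: inner_commute less_eq_vec_def)
  moreover have "gb \<bullet> uN' \<le> (transpose A *v yb) \<bullet> uN'"
    using dot_mono[of uN' gb "transpose A *v yb"] f sb
    by (simp add: inner_commute less_eq_vec_def)
  moreover have "(transpose A *v (ya + yb)) \<bullet> u0' + (transpose A *v yb) \<bullet> uN'
      = (ya + yb) \<bullet> (A *v u0') + yb \<bullet> (A *v uN')"
    by (metis tr_dot inner_commute)
  moreover have "(ya + yb) \<bullet> (A *v u0') + yb \<bullet> (A *v uN')
      = ya \<bullet> (A *v u0') + yb \<bullet> (A *v u0' + A *v uN')"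
    by (simp add: inner_add_left inner_add_right)
  moreover have "ya \<bullet> (A *v u0') \<le> ya \<bullet> ra" using dot_mono y f by blast
  moreover have "yb \<bullet> (A *v u0' + A *v uN') \<le> yb \<bullet> rb" using dot_mono y f by blast
  ultimately show ?thesis using val by linarith
qed

lemma dual_cert:
  fixes A :: "real^'j::finite^'k::finite"
  assumes z: "0 \<le> za" "0 \<le> zb"
    and ta: "A *v (za + zb) + ta = ra" "0 \<le> ta"
    and tb: "A *v zb + tb = rb" "0 \<le> tb"
    and c1: "ta \<bullet> pN = 0" "tb \<bullet> p0 = 0"
    and c2: "za \<bullet> (transpose A *v pN - ga) = 0"
        "zb \<bullet> (transpose A *v pN + transpose A *v p0 - gb) = 0"
    and f: "ga \<le> transpose A *v pN'" "gb \<le> transpose A *v pN' + transpose A *v p0'"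
        "0 \<le> pN'" "0 \<le> p0'"
  shows "ra \<bullet> pN + rb \<bullet> p0 \<le> ra \<bullet> pN' + rb \<bullet> p0'"
proof -
  have ra: "ra = A *v (za + zb) + ta" using ta by simp
  have rb: "rb = A *v zb + tb" using tb by simp
  have val: "ra \<bullet> pN + rb \<bullet> p0 = za \<bullet> ga + zb \<bullet> gb"
  proof -
    have "ra \<bullet> pN + rb \<bullet> p0 = (A *v (za + zb)) \<bullet> pN + (A *v zb) \<bullet> p0"
      using c1 by (simp add: ra rb inner_add_left inner_add_right inner_commute)
    also have "\<dots> = za \<bullet> (transpose A *v pN) + zb \<bullet> (transpose A *v pN + transpose A *v p0)"
      by (simp add: tr_dot inner_add_left inner_add_right)
    also have "\<dots> = za \<bullet> ga + zb \<bullet> gb"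
      using c2 by (simp add: inner_diff_right inner_add_right)
    finally show ?thesis .
  qed
  have l1: "A *v (za + zb) \<le> ra" unfolding ra using ta(2) by (simp add: less_eq_vec_def)
  have l2: "A *v zb \<le> rb" unfolding rb using tb(2) by (simp add: less_eq_vec_def)
  have "(A *v (za + zb)) \<bullet> pN' \<le> ra \<bullet> pN'"
    using dot_mono[OF f(3) l1] by (simp add: inner_commute)
  moreover have "(A *v zb) \<bullet> p0' \<le> rb \<bullet> p0'"
    using dot_mono[OF f(4) l2] by (simp add: inner_commute)
  moreover have "(A *v (za + zb)) \<bullet> pN' + (A *v zb) \<bullet> p0'
      = za \<bullet> (transpose A *v pN') + zb \<bullet> (transpose A *v pN' + transpose A *v p0')"
    by (simp add: tr_dot inner_add_left inner_add_right)
  moreover have "za \<bullet> ga \<le> za \<bullet> (transpose A *v pN')" using dot_mono z f by blast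
  moreover have "zb \<bullet> gb \<le> zb \<bullet> (transpose A *v pN' + transpose A *v p0')" using dot_mono z f by blast
  ultimately show ?thesis using val by linarith
qed
theorem mainTheorem4:
  fixes A :: "real^'j::finite^'k::finite"
    and \<beta> b :: "real^'k" and \<gamma> c :: "real^'j" and T :: real and N :: nat
    and Ks :: "nat \<Rightarrow> 'k set" and Js :: "nat \<Rightarrow> 'j set"
    and u :: "nat \<Rightarrow> real^'j" and xd :: "nat \<Rightarrow> real^'k"
    and p :: "nat \<Rightarrow> real^'k" and qd :: "nat \<Rightarrow> real^'j"
    and u0b uNb qN q0b :: "real^'j" and x0 xNb p0b pNb :: "real^'k"
    and \<tau> :: "nat \<Rightarrow> real"
    and Uc :: "real^'j" and Pc :: "real^'k" and xlow :: "real^'k" and qlow :: "real^'j"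
  assumes "0 < T"
    and "nondeg_I A b c"
    and "base_sequence A b c N Ks Js u xd p qd"
    and "bs_system A \<beta> \<gamma> T N Ks Js xd qd u0b uNb qN q0b x0 xNb p0b pNb \<tau>"
    and "bs_nonneg N xd qd u0b uNb qN q0b x0 xNb p0b pNb \<tau>"
    and "Uc = (\<Sum>n\<in>{1..N}. \<tau> n *\<^sub>R u n)"
    and "Pc = (\<Sum>n\<in>{1..N}. \<tau> n *\<^sub>R p n)"
    and "\<And>k. xlow $ k = - min 0 (Min ((\<lambda>n. \<Sum>m\<in>{1..n}. xd m $ k * \<tau> m) ` {1..N}))"
    and "\<And>j. qlow $ j = - min 0 (Min ((\<lambda>n. \<Sum>m\<in>{n..N}. qd m $ j * \<tau> m) ` {1..N}))"
  shows "bnd_primal_optimal A \<beta> b \<gamma> c T xlow Uc u0b uNb \<and>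
         bnd_dual_optimal A \<beta> b \<gamma> c T qlow Pc pNb p0b"
proof -
  note bsq = assms(3)[unfolded base_sequence_def]
  note sys = assms(4)[unfolded bs_system_def]
  note nn = assms(5)[unfolded bs_nonneg_def]
  have N1: "1 \<le> N" using bsq by blast
  have basis: "\<And>n. n \<in> {1..N} \<Longrightarrow> primal_basic_sol A b (Ks n) (Js n) (u n) (xd n) \<and>
        dual_basic_sol A c (Ks n) (Js n) (p n) (qd n) \<and> 0 \<le> u n \<and> 0 \<le> p n"
    using bsq by blast
  have adj: "\<And>n. n \<in> {1..<N} \<Longrightarrow> adjacent (Ks n) (Js n) (Ks (Suc n)) (Js (Suc n))"
    using bsq by blast
  have K01: "Ks 0 \<subseteq> Ks 1" and JN: "Js (Suc N) \<subseteq> Js N" using bsq by blast+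
  have lv: "\<And>n. n \<in> {1..<N} \<Longrightarrow> (case leaving Ks Js n of
          Inl k \<Rightarrow> xseq x0 xd \<tau> n $ k = 0
        | Inr j \<Rightarrow> qseq qN qd \<tau> N n $ j = 0)" using sys by blast
  have sumT: "(\<Sum>n\<in>{1..N}. \<tau> n) = T" using sys by blast
  have cs0: "\<forall>j\<in>Js 0. u0b $ j = 0" "\<forall>k. k \<notin> Ks 0 \<longrightarrow> x0 $ k = 0"
     "\<forall>k\<in>Ks 0. p0b $ k = 0" "\<forall>j. j \<notin> Js 0 \<longrightarrow> q0b $ j = 0"
     "\<forall>k\<in>Ks (Suc N). pNb $ k = 0" "\<forall>j. j \<notin> Js (Suc N) \<longrightarrow> qN $ j = 0"
     "\<forall>j\<in>Js (Suc N). uNb $ j = 0" "\<forall>k. k \<notin> Ks (Suc N) \<longrightarrow> xNb $ k = 0"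
    using sys by blast+
  have eqs: "A *v u0b + x0 = \<beta>" "transpose A *v pNb - qN = \<gamma>"
     "A *v uNb + xNb - xseq x0 xd \<tau> N = 0"
     "transpose A *v p0b - q0b + qseq qN qd \<tau> N 0 = 0" using sys by blast+
  have nnv: "0 \<le> u0b" "0 \<le> uNb" "0 \<le> qN" "0 \<le> q0b" "0 \<le> x0" "0 \<le> xNb" "0 \<le> p0b" "0 \<le> pNb"
    using nn by blast+
  have tau0: "\<And>n. n \<in> {1..N} \<Longrightarrow> 0 \<le> \<tau> n" using nn by blast
  have xqnn: "\<And>n. n \<in> {0..N} \<Longrightarrow> 0 \<le> xseq x0 xd \<tau> n \<and> 0 \<le> qseq qN qd \<tau> N n" using nn by blast

  define Sx where "Sx = (\<Sum>n\<in>{1..N}. \<tau> n *\<^sub>R xd n)"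
  define Sq where "Sq = (\<Sum>n\<in>{1..N}. \<tau> n *\<^sub>R qd n)"
  have xN: "xseq x0 xd \<tau> N = x0 + Sx" by (simp add: xseq_def Sx_def)
  have q0: "qseq qN qd \<tau> N 0 = qN + Sq"
  proof -
    have "{0<..N} = {1..N}" by auto
    then show ?thesis by (simp add: qseq_def Sq_def)
  qed
  have AUc: "A *v Uc = T *\<^sub>R b - Sx"
  proof -
    have "A *v Uc = (\<Sum>n\<in>{1..N}. \<tau> n *\<^sub>R (A *v u n))"
      by (simp add: assms(6) vec.sum sc)
    also have "\<dots> = (\<Sum>n\<in>{1..N}. \<tau> n *\<^sub>R b - \<tau> n *\<^sub>R xd n)"
    proof (rule sum.cong)
      fix n assume "n \<in> {1..N}"
      then have "A *v u n + xd n = b" using basis unfolding primal_basic_sol_def by blast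
      then show "\<tau> n *\<^sub>R (A *v u n) = \<tau> n *\<^sub>R b - \<tau> n *\<^sub>R xd n"
        by (metis add_diff_cancel_right' scaleR_diff_right)
    qed simp
    also have "\<dots> = T *\<^sub>R b - Sx"
      by (simp add: sum_subtractf Sx_def sumT[symmetric] scaleR_sum_left)
    finally show ?thesis .
  qed
  have APc: "transpose A *v Pc = T *\<^sub>R c + Sq"
  proof -
    have "transpose A *v Pc = (\<Sum>n\<in>{1..N}. \<tau> n *\<^sub>R (transpose A *v p n))"
      by (simp add: assms(7) vec.sum sc)
    also have "\<dots> = (\<Sum>n\<in>{1..N}. \<tau> n *\<^sub>R c + \<tau> n *\<^sub>R qd n)"
    proof (rule sum.cong)
      fix n assume "n \<in> {1..N}"
      then have "transpose A *v p n - qd n = c" using basis unfolding dual_basic_sol_def by blast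
      then show "\<tau> n *\<^sub>R (transpose A *v p n) = \<tau> n *\<^sub>R c + \<tau> n *\<^sub>R qd n"
        by (metis diff_add_cancel scaleR_add_right)
    qed simp
    also have "\<dots> = T *\<^sub>R c + Sq"
      by (simp add: sum.distrib Sq_def sumT[symmetric] scaleR_sum_left)
    finally show ?thesis .
  qed
  have xs_comp: "\<And>n k. xseq x0 xd \<tau> n $ k = x0 $ k + (\<Sum>m\<in>{1..n}. xd m $ k * \<tau> m)"
    by (simp add: xseq_def sum_component mult.commute)
  have qs_comp: "\<And>n j. n \<in> {1..N} \<Longrightarrow> qseq qN qd \<tau> N (n - 1) $ j = qN $ j + (\<Sum>m\<in>{n..N}. qd m $ j * \<tau> m)"
  proof -
    fix n j assume "n \<in> {1..N}"
    then have "{n - 1<..N} = {n..N}" by auto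
    then show "qseq qN qd \<tau> N (n - 1) $ j = qN $ j + (\<Sum>m\<in>{n..N}. qd m $ j * \<tau> m)"
      by (simp add: qseq_def sum_component mult.commute)
  qed
  have qsN: "qseq qN qd \<tau> N N = qN" by (simp add: qseq_def)
  have xbnd: "0 \<le> x0 $ k - xlow $ k \<and> (\<forall>m\<in>{0..N}. x0 $ k - xlow $ k \<le> xseq x0 xd \<tau> m $ k)" for k
  proof -
    let ?f = "\<lambda>n. \<Sum>m\<in>{1..n}. xd m $ k * \<tau> m"
    have fin: "finite (?f ` {1..N})" "?f ` {1..N} \<noteq> {}" using N1 by auto
    obtain m0 where m0: "m0 \<in> {1..N}" "Min (?f ` {1..N}) = ?f m0"
      using Min_in[OF fin] by auto
    have "0 \<le> xseq x0 xd \<tau> m0 $ k" using xqnn[of m0] m0(1) by (auto simp: less_eq_vec_def)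
    then have a: "0 \<le> x0 $ k + ?f m0" by (simp add: xs_comp)
    have x0k: "0 \<le> x0 $ k" using nnv(5) by (simp add: less_eq_vec_def)
    have d: "x0 $ k - xlow $ k = x0 $ k + min 0 (Min (?f ` {1..N}))" using assms(8)[of k] by simp
    have "0 \<le> x0 $ k - xlow $ k" unfolding d m0(2) using a x0k by (simp add: min_def)
    moreover have "x0 $ k - xlow $ k \<le> xseq x0 xd \<tau> m $ k" if "m \<in> {0..N}" for m
    proof (cases "m = 0")
      case True then show ?thesis using d by (simp add: xs_comp)
    next
      case False
      then have "m \<in> {1..N}" using that by auto
      then have "Min (?f ` {1..N}) \<le> ?f m" using fin by auto
      then show ?thesis using d by (simp add: xs_comp)
    qed
    ultimately show ?thesis by blast
  qed
  have qbnd: "0 \<le> qN $ j - qlow $ j \<and> (\<forall>m\<in>{0..N}. qN $ j - qlow $ j \<le> qseq qN qd \<tau> N m $ j)" for j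
  proof -
    let ?f = "\<lambda>n. \<Sum>m\<in>{n..N}. qd m $ j * \<tau> m"
    have fin: "finite (?f ` {1..N})" "?f ` {1..N} \<noteq> {}" using N1 by auto
    obtain m0 where m0: "m0 \<in> {1..N}" "Min (?f ` {1..N}) = ?f m0"
      using Min_in[OF fin] by auto
    have "0 \<le> qseq qN qd \<tau> N (m0 - 1) $ j" using xqnn[of "m0 - 1"] m0(1) by (auto simp: less_eq_vec_def)
    then have a: "0 \<le> qN $ j + ?f m0" using qs_comp[OF m0(1)] by simp
    have x0k: "0 \<le> qN $ j" using nnv(3) by (simp add: less_eq_vec_def)
    have d: "qN $ j - qlow $ j = qN $ j + min 0 (Min (?f ` {1..N}))" using assms(9)[of j] by simp
    have "0 \<le> qN $ j - qlow $ j" unfolding d m0(2) using a x0k by (simp add: min_def)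
    moreover have "qN $ j - qlow $ j \<le> qseq qN qd \<tau> N m $ j" if "m \<in> {0..N}" for m
    proof (cases "m = N")
      case True then show ?thesis using d qsN by simp
    next
      case False
      then have m1: "Suc m \<in> {1..N}" using that by auto
      then have "Min (?f ` {1..N}) \<le> ?f (Suc m)" using fin by auto
      then show ?thesis using d qs_comp[OF m1] by simp
    qed
    ultimately show ?thesis by blast
  qed
  have bv: "\<And>n. basic_vars (Ks n) (Js n) = Inl ` Ks n \<union> Inr ` (- Js n)" by (simp add: basic_vars_def)
  have xkey: "(p0b + Pc) $ k = 0 \<or> (x0 - xlow) $ k = 0" for k
  proof (cases "\<exists>m\<in>{0..N}. xseq x0 xd \<tau> m $ k = 0")
    case True
    then show ?thesis using xbnd[of k] by force
  next
    case False
    have xs0: "xseq x0 xd \<tau> 0 = x0" by (simp add: xseq_def)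
    have "k \<in> Ks 0" using False cs0(2) xs0 by force
    then have p0k: "p0b $ k = 0" using cs0(3) by blast
    have inK: "k \<in> Ks n" if "n \<in> {1..N}" for n
    proof -
      have "1 \<le> n" "n \<le> N" using that by auto
      then show ?thesis
      proof (induction n rule: dec_induct)
        case base then show ?case using \<open>k \<in> Ks 0\<close> K01 by auto
      next
        case (step n)
        show ?case
        proof (rule ccontr)
          assume nk: "k \<notin> Ks (Suc n)"
          have nN: "n \<in> {1..<N}" using step by auto
          have mem: "Inl k \<in> basic_vars (Ks n) (Js n) - basic_vars (Ks (Suc n)) (Js (Suc n))"
            using step nk by (auto simp: bv)
          have "leaving Ks Js n = Inl k"
            unfolding leaving_def using the1[OF _ mem] adj[OF nN] by (simp add: adjacent_def)
          then have "xseq x0 xd \<tau> n $ k = 0" using lv[OF nN] by simp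
          then show False using False nN by auto
        qed
      qed
    qed
    have "Pc $ k = 0"
      unfolding assms(7) sum_component
    proof (rule sum.neutral, intro ballI)
      fix n assume n: "n \<in> {1..N}"
      then have "p n $ k = 0" using basis[OF n] inK[OF n] unfolding dual_basic_sol_def by blast
      then show "(\<tau> n *\<^sub>R p n) $ k = 0" by simp
    qed
    then show ?thesis using p0k by simp
  qed
  have qkey: "(uNb + Uc) $ j = 0 \<or> (qN - qlow) $ j = 0" for j
  proof (cases "\<exists>m\<in>{0..N}. qseq qN qd \<tau> N m $ j = 0")
    case True
    then show ?thesis using qbnd[of j] by force
  next
    case False
    have "j \<in> Js (Suc N)" using False cs0(6) qsN by force
    then have uNj: "uNb $ j = 0" using cs0(7) by blast
    have inJ: "j \<in> Js n" if "n \<in> {1..N}" for n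
    proof -
      have "n \<le> N" using that by auto
      then show ?thesis using that
      proof (induction n rule: inc_induct)
        case base then show ?case using \<open>j \<in> Js (Suc N)\<close> JN by auto
      next
        case (step n)
        show ?case
        proof (rule ccontr)
          assume nk: "j \<notin> Js n"
          have nN: "n \<in> {1..<N}" using step by auto
          have IH: "j \<in> Js (Suc n)" using step nN by auto
          have mem: "Inr j \<in> basic_vars (Ks n) (Js n) - basic_vars (Ks (Suc n)) (Js (Suc n))"
            using IH nk by (auto simp: bv)
          have "leaving Ks Js n = Inr j"
            unfolding leaving_def using the1[OF _ mem] adj[OF nN] by (simp add: adjacent_def)
          then have "qseq qN qd \<tau> N n $ j = 0" using lv[OF nN] by simp
          then show False using False nN by auto
        qed
      qed
    qed
    have "Uc $ j = 0"
      unfolding assms(6) sum_component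
    proof (rule sum.neutral, intro ballI)
      fix n assume n: "n \<in> {1..N}"
      then have "u n $ j = 0" using basis[OF n] inJ[OF n] unfolding primal_basic_sol_def by blast
      then show "(\<tau> n *\<^sub>R u n) $ j = 0" by simp
    qed
    then show ?thesis using uNj by simp
  qed
  have Au0: "A *v u0b = \<beta> - x0" using eqs(1) by (simp add: algebra_simps)
  have AuN: "A *v uNb = x0 + Sx - xNb" using eqs(3) xN by (simp add: algebra_simps)
  have ApN: "transpose A *v pNb = \<gamma> + qN" using eqs(2) by (simp add: algebra_simps)
  have Ap0: "transpose A *v p0b = q0b - qN - Sq" using eqs(4) q0 by (simp add: algebra_simps)
  have Pc0: "0 \<le> Pc" unfolding assms(7) less_eq_vec_def sum_component
    using basis tau0 by (auto intro!: sum_nonneg simp: less_eq_vec_def)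
  have Uc0: "0 \<le> Uc" unfolding assms(6) less_eq_vec_def sum_component
    using basis tau0 by (auto intro!: sum_nonneg simp: less_eq_vec_def)
  have pfeas: "bnd_primal_feasible A \<beta> b T xlow Uc u0b uNb"
    unfolding bnd_primal_feasible_def
  proof (intro conjI)
    show "A *v u0b \<le> \<beta> - xlow" unfolding Au0 less_eq_vec_def using xbnd by auto
    show "A *v u0b + A *v uNb \<le> \<beta> + T *\<^sub>R b - A *v Uc"
      unfolding Au0 AuN AUc less_eq_vec_def using nnv(6) by (auto simp: less_eq_vec_def)
  qed (use nnv in auto)
  have popt: "bnd_primal_optimal A \<beta> b \<gamma> c T xlow Uc u0b uNb"
    unfolding bnd_primal_optimal_def
  proof (intro conjI pfeas allI impI)
    fix u0' uN' assume f: "bnd_primal_feasible A \<beta> b T xlow Uc u0' uN'"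
    show "(\<gamma> + T *\<^sub>R c) \<bullet> u0' + \<gamma> \<bullet> uN' \<le> (\<gamma> + T *\<^sub>R c) \<bullet> u0b + \<gamma> \<bullet> uNb"
    proof (rule primal_cert[where ya = "p0b + Pc" and yb = pNb and sa = q0b and sb = qN
          and ra = "\<beta> - xlow" and rb = "\<beta> + T *\<^sub>R b - A *v Uc" and A = A])
      show "0 \<le> p0b + Pc" using nnv(7) Pc0 by simp
      show "0 \<le> pNb" using nnv by simp
      show "transpose A *v (p0b + Pc + pNb) = \<gamma> + T *\<^sub>R c + q0b"
        by (simp only: vec.add Ap0 APc ApN) (simp add: algebra_simps)
      show "0 \<le> q0b" "0 \<le> qN" using nnv by simp_all
      show "transpose A *v pNb = \<gamma> + qN" by (rule ApN)
      show "q0b \<bullet> u0b = 0" by (rule dot_zero) (use cs0 in blast)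
      show "qN \<bullet> uNb = 0" by (rule dot_zero) (use cs0 in blast)
      have "\<beta> - xlow - A *v u0b = x0 - xlow" by (simp add: Au0)
      then show "(p0b + Pc) \<bullet> (\<beta> - xlow - A *v u0b) = 0" using dot_zero xkey by metis
      have "\<beta> + T *\<^sub>R b - A *v Uc - A *v u0b - A *v uNb = xNb" by (simp add: Au0 AuN AUc)
      moreover have "pNb \<bullet> xNb = 0" by (rule dot_zero) (use cs0 in blast)
      ultimately show "pNb \<bullet> (\<beta> + T *\<^sub>R b - A *v Uc - A *v u0b - A *v uNb) = 0" by simp
    qed (use f in \<open>auto simp: bnd_primal_feasible_def\<close>)
  qed
  have dfeas: "bnd_dual_feasible A \<gamma> c T qlow Pc pNb p0b"
    unfolding bnd_dual_feasible_def
  proof (intro conjI)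
    show "\<gamma> + qlow \<le> transpose A *v pNb" unfolding ApN less_eq_vec_def using qbnd by auto
    show "\<gamma> + T *\<^sub>R c - transpose A *v Pc \<le> transpose A *v pNb + transpose A *v p0b"
      unfolding Ap0 ApN APc less_eq_vec_def using nnv(4) by (auto simp: less_eq_vec_def)
  qed (use nnv in auto)
  have dopt: "bnd_dual_optimal A \<beta> b \<gamma> c T qlow Pc pNb p0b"
    unfolding bnd_dual_optimal_def
  proof (intro conjI dfeas allI impI)
    fix pN' p0' assume f: "bnd_dual_feasible A \<gamma> c T qlow Pc pN' p0'"
    show "(\<beta> + T *\<^sub>R b) \<bullet> pNb + \<beta> \<bullet> p0b \<le> (\<beta> + T *\<^sub>R b) \<bullet> pN' + \<beta> \<bullet> p0'"
    proof (rule dual_cert[where za = "uNb + Uc" and zb = u0b and ta = xNb and tb = x0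
          and ga = "\<gamma> + qlow" and gb = "\<gamma> + T *\<^sub>R c - transpose A *v Pc" and A = A])
      show "0 \<le> uNb + Uc" using nnv(2) Uc0 by simp
      show "0 \<le> u0b" using nnv by simp
      show "A *v (uNb + Uc + u0b) + xNb = \<beta> + T *\<^sub>R b"
        by (simp only: vec.add Au0 AuN AUc) (simp add: algebra_simps)
      show "A *v u0b + x0 = \<beta>" by (rule eqs(1))
      show "0 \<le> xNb" "0 \<le> x0" using nnv by simp_all
      show "xNb \<bullet> pNb = 0" by (rule dot_zero) (use cs0 in blast)
      show "x0 \<bullet> p0b = 0" by (rule dot_zero) (use cs0 in blast)
      have "transpose A *v pNb - (\<gamma> + qlow) = qN - qlow" unfolding ApN by simp
      then show "(uNb + Uc) \<bullet> (transpose A *v pNb - (\<gamma> + qlow)) = 0" using dot_zero qkey by metis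
      have "transpose A *v pNb + transpose A *v p0b - (\<gamma> + T *\<^sub>R c - transpose A *v Pc) = q0b"
        unfolding ApN Ap0 APc by (simp add: algebra_simps)
      moreover have "u0b \<bullet> q0b = 0" by (rule dot_zero) (use cs0 in blast)
      ultimately show "u0b \<bullet> (transpose A *v pNb + transpose A *v p0b - (\<gamma> + T *\<^sub>R c - transpose A *v Pc)) = 0" by simp
    qed (use f in \<open>auto simp: bnd_dual_feasible_def\<close>)
  qed
  show ?thesis using popt dopt by blast
qed
end
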